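(* Let $\mathcal{J}\in\{\mathcal{F},\mathcal{I},\mathcal{I}_1,\mathcal{C},\mathcal{C}_v\}$. If $M\in\mathcal{J}$ then $M\cup\{2\}\in\mathcal{J}$.
   Context: For a summable sequence $\mathbf{x}=(x_n)$ of positive reals (finite sequences are allowed and are identified with eventually-zero sequences), the achievement set is $\mathcal{A}(\mathbf{x})=\{\sum_{n\in A}x_n : A\subseteq\mathbb{N}\}$. The cardinal function $f_{\mathbf{x}}:\mathcal{A}(\mathbf{x})\to\{1,2,3,\dots\}\cup\{\omega,\mathfrak{c}\}$ sends $x$ to the number (cardinality) of $0$–$1$ sequences $(\varepsilon_n)$, indexed by the nonzero terms, with $\sum\varepsilon_n x_n=x$. Families of sets: $\mathcal{F}$ = ranges of cardinal functions of finite sequences; $\mathcal{I}$ = ranges of cardinal functions of sequences whose achievement set is a finite union of (nondegenerate) closed intervals; $\mathcal{I}_1$ = ranges of cardinal functions of sequences whose achievement set is a single closed interval; $\mathcal{C}$ = ranges for sequences whose achievement set is a Cantor set; $\mathcal{C}_v$ = ranges for sequences whose achievement set is a Cantorval (a nonempty compact subset of $\mathbb{R}$ equal to the closure of its interior such that both endpoints of every nontrivial connected component are accumulation points of one-point components). *)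

theory Defs
  imports "HOL-Analysis.Analysis"
begin

text \<open>Admissible sequences: summable sequences of positive reals; a finite sequence
  of positive reals is identified with an eventually-zero sequence whose nonzero
  terms form an initial segment.\<close>
definition pos_seq :: "(nat \<Rightarrow> real) \<Rightarrow> bool" where
  "pos_seq x \<longleftrightarrow> summable x \<and>
     ((\<forall>n. x n > 0) \<or> (\<exists>N. \<forall>n. (n < N \<longrightarrow> x n > 0) \<and> (N \<le> n \<longrightarrow> x n = 0)))"

definition finite_seq :: "(nat \<Rightarrow> real) \<Rightarrow> bool" where
  "finite_seq x \<longleftrightarrow> pos_seq x \<and> finite {n. x n \<noteq> 0}"

definition subsum :: "(nat \<Rightarrow> real) \<Rightarrow> nat set \<Rightarrow> real" where
  "subsum x A = (\<Sum>n. if n \<in> A then x n else 0)"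

definition achievement_set :: "(nat \<Rightarrow> real) \<Rightarrow> real set" where
  "achievement_set x = {subsum x A | A. A \<subseteq> UNIV}"

text \<open>0-1 sequences indexed by the nonzero terms correspond to subsets of the
  set of indices of nonzero terms.\<close>
definition representations :: "(nat \<Rightarrow> real) \<Rightarrow> real \<Rightarrow> nat set set" where
  "representations x t = {A. A \<subseteq> {n. x n \<noteq> 0} \<and> subsum x A = t}"

datatype cardval = Fin nat | Omega | Contin

definition cardval_of :: "'a set \<Rightarrow> cardval" where
  "cardval_of S = (if finite S then Fin (card S) else if countable S then Omega else Contin)"

definition cardinal_function :: "(nat \<Rightarrow> real) \<Rightarrow> real \<Rightarrow> cardval" where
  "cardinal_function x t = cardval_of (representations x t)"

definition cf_range :: "(nat \<Rightarrow> real) \<Rightarrow> cardval set" where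
  "cf_range x = cardinal_function x ` achievement_set x"

definition finite_union_intervals :: "real set \<Rightarrow> bool" where
  "finite_union_intervals S \<longleftrightarrow>
     (\<exists>(n::nat) a b. (\<forall>i<n. a i < b i) \<and> S = (\<Union>i<n. {a i..b i}))"

definition single_interval :: "real set \<Rightarrow> bool" where
  "single_interval S \<longleftrightarrow> (\<exists>a b. a < b \<and> S = {a..b})"

definition cantor_set :: "real set \<Rightarrow> bool" where
  "cantor_set S \<longleftrightarrow> S \<noteq> {} \<and> compact S \<and> (\<forall>y\<in>S. y islimpt S) \<and>
     (\<forall>y\<in>S. connected_component_set S y = {y})"

definition cantorval :: "real set \<Rightarrow> bool" where
  "cantorval S \<longleftrightarrow> S \<noteq> {} \<and> compact S \<and> closure (interior S) = S \<and>
     (\<forall>y\<in>S. let C = connected_component_set S y in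
        (\<exists>z\<in>C. z \<noteq> y) \<longrightarrow>
          (Inf C) islimpt {p\<in>S. connected_component_set S p = {p}} \<and>
          (Sup C) islimpt {p\<in>S. connected_component_set S p = {p}})"

definition fam_F :: "cardval set set" where
  "fam_F = {cf_range x | x. finite_seq x}"

definition fam_I :: "cardval set set" where
  "fam_I = {cf_range x | x. pos_seq x \<and> finite_union_intervals (achievement_set x)}"

definition fam_I1 :: "cardval set set" where
  "fam_I1 = {cf_range x | x. pos_seq x \<and> single_interval (achievement_set x)}"

definition fam_C :: "cardval set set" where
  "fam_C = {cf_range x | x. pos_seq x \<and> cantor_set (achievement_set x)}"

definition fam_Cv :: "cardval set set" where
  "fam_Cv = {cf_range x | x. pos_seq x \<and> cantorval (achievement_set x)}"

end

theory Submission
  imports Defs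
begin

lemma pos_nonneg: "pos_seq x \<Longrightarrow> 0 \<le> x n"
  unfolding pos_seq_def by (metis less_eq_real_def linorder_not_le order_refl)

lemma pos_summable: "pos_seq x \<Longrightarrow> summable x"
  unfolding pos_seq_def by blast

lemma mask_summable: "pos_seq x \<Longrightarrow> summable (\<lambda>n. if n \<in> A then x n else 0)"
  by (rule summable_comparison_test'[OF pos_summable[of x]]) (auto simp: pos_nonneg)

lemma subsum_nonneg: "pos_seq x \<Longrightarrow> 0 \<le> subsum x A"
  unfolding subsum_def by (rule suminf_nonneg[OF mask_summable]) (auto simp: pos_nonneg)

lemma subsum_compl: "pos_seq x \<Longrightarrow> subsum x A + subsum x (- A) = suminf x"
proof -
  assume p: "pos_seq x"
  have "subsum x A + subsum x (- A) = (\<Sum>n. (if n \<in> A then x n else 0) + (if n \<in> -A then x n else 0))"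
    unfolding subsum_def by (rule suminf_add[OF mask_summable[OF p] mask_summable[OF p]])
  also have "\<dots> = suminf x" by (rule arg_cong[where f=suminf]) auto
  finally show ?thesis .
qed

lemma subsum_le: "pos_seq x \<Longrightarrow> subsum x A \<le> suminf x"
  using subsum_compl[of x A] subsum_nonneg[of x "-A"] by linarith

lemma subsum_ge_term: "pos_seq x \<Longrightarrow> n \<in> A \<Longrightarrow> x n \<le> subsum x A"
proof -
  assume p: "pos_seq x" and n: "n \<in> A"
  have "(\<Sum>i\<in>{n}. (if i \<in> A then x i else 0)) \<le> subsum x A"
    unfolding subsum_def by (rule sum_le_suminf[OF mask_summable[OF p]]) (auto simp: pos_nonneg[OF p])
  then show ?thesis using n by simp
qed

lemma subsum_empty: "subsum x {} = 0" unfolding subsum_def by simp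

lemma subsum_supp: "subsum x {n. x n \<noteq> 0} = suminf x"
  unfolding subsum_def by (rule arg_cong[where f=suminf]) auto

lemma subsum_eq_top: "pos_seq x \<Longrightarrow> B \<subseteq> {n. x n \<noteq> 0} \<Longrightarrow> subsum x B = suminf x \<Longrightarrow> B = {n. x n \<noteq> 0}"
proof (rule ccontr)
  assume p: "pos_seq x" and B: "B \<subseteq> {n. x n \<noteq> 0}" "subsum x B = suminf x" "B \<noteq> {n. x n \<noteq> 0}"
  then obtain n where n: "x n \<noteq> 0" "n \<notin> B" by blast
  have "x n \<le> subsum x (-B)" using subsum_ge_term[OF p, of n "-B"] n by simp
  moreover have "x n > 0" using n pos_nonneg[OF p, of n] by simp
  ultimately show False using subsum_compl[OF p, of B] B by linarith
qed

lemma subsum_eq_zero: "pos_seq x \<Longrightarrow> B \<subseteq> {n. x n \<noteq> 0} \<Longrightarrow> subsum x B = 0 \<Longrightarrow> B = {}"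
proof (rule ccontr)
  assume p: "pos_seq x" and B: "B \<subseteq> {n. x n \<noteq> 0}" "subsum x B = 0" "B \<noteq> {}"
  then obtain n where n: "n \<in> B" by blast
  have "x n \<le> subsum x B" using subsum_ge_term[OF p n] .
  moreover have "x n > 0" using n B pos_nonneg[OF p, of n] by auto
  ultimately show False using B by linarith
qed

definition shift :: "(nat \<Rightarrow> real) \<Rightarrow> nat \<Rightarrow> real" where
  "shift x n = (if n = 0 then suminf x else x (n - 1))"

lemma shift_Suc[simp]: "shift x (Suc n) = x n" by (simp add: shift_def)
lemma shift_0[simp]: "shift x 0 = suminf x" by (simp add: shift_def)

lemma shift_pos: "pos_seq x \<Longrightarrow> x 0 > 0 \<Longrightarrow> pos_seq (shift x)"
proof -
  assume p: "pos_seq x" and x0: "x 0 > 0"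
  have s: "suminf x > 0" using subsum_ge_term[OF p, of 0 UNIV] x0 subsum_le[OF p, of UNIV] by simp
  have sm: "summable (shift x)"
    using pos_summable[OF p] summable_Suc_iff[of "shift x"] by (simp add: shift_def)
  from p have "(\<forall>n. x n > 0) \<or> (\<exists>N. \<forall>n. (n < N \<longrightarrow> x n > 0) \<and> (N \<le> n \<longrightarrow> x n = 0))"
    unfolding pos_seq_def by blast
  then show ?thesis
  proof
    assume "\<forall>n. x n > 0" then show ?thesis using sm s unfolding pos_seq_def shift_def by auto
  next
    assume "\<exists>N. \<forall>n. (n < N \<longrightarrow> x n > 0) \<and> (N \<le> n \<longrightarrow> x n = 0)"
    then obtain N where N: "\<forall>n. (n < N \<longrightarrow> x n > 0) \<and> (N \<le> n \<longrightarrow> x n = 0)" by blast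
    have "\<forall>n. (n < Suc N \<longrightarrow> shift x n > 0) \<and> (Suc N \<le> n \<longrightarrow> shift x n = 0)"
      using N s unfolding shift_def by auto
    then show ?thesis using sm unfolding pos_seq_def by blast
  qed
qed

lemma subsum_shift: "pos_seq x \<Longrightarrow> subsum (shift x) A = (if 0 \<in> A then suminf x else 0) + subsum x {n. Suc n \<in> A}"
proof -
  assume p: "pos_seq x"
  have sm: "summable (\<lambda>n. if n \<in> A then shift x n else 0)"
    using mask_summable[OF p, of "{n. Suc n \<in> A}"] summable_Suc_iff[of "\<lambda>n. if n \<in> A then shift x n else 0"]
    by (simp add: shift_def cong: if_cong)
  have "(\<Sum>n. if Suc n \<in> A then x n else 0) = (\<Sum>n. if n \<in> A then shift x n else 0) - (if 0 \<in> A then suminf x else 0)"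
    using suminf_split_head[OF sm] by (simp only: shift_Suc shift_0)
  then show ?thesis unfolding subsum_def by simp
qed

lemma ach_shift: "pos_seq x \<Longrightarrow> achievement_set (shift x) = achievement_set x \<union> (+) (suminf x) ` achievement_set x"
proof -
  assume p: "pos_seq x"
  have a: "achievement_set z = range (subsum z)" for z unfolding achievement_set_def by auto
  show ?thesis unfolding a
  proof (intro equalityI subsetI)
    fix t assume "t \<in> range (subsum (shift x))"
    then obtain A where "t = subsum (shift x) A" by blast
    then show "t \<in> range (subsum x) \<union> (+) (suminf x) ` range (subsum x)"
      using subsum_shift[OF p, of A] by (auto split: if_splits)
  next
    fix t assume "t \<in> range (subsum x) \<union> (+) (suminf x) ` range (subsum x)"
    then obtain B where "t = subsum x B \<or> t = suminf x + subsum x B" by blast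
    moreover have "subsum (shift x) (Suc ` B) = subsum x B"
      using subsum_shift[OF p, of "Suc ` B"] by (simp add: image_iff)
    moreover have "{n. Suc n \<in> insert 0 (Suc ` B)} = B" by auto
    then have "subsum (shift x) (insert 0 (Suc ` B)) = suminf x + subsum x B"
      using subsum_shift[OF p, of "insert 0 (Suc ` B)"] by simp
    ultimately show "t \<in> range (subsum (shift x))" by (metis rangeI)
  qed
qed

lemma supp_shift: "suminf x > 0 \<Longrightarrow> {n. shift x n \<noteq> 0} = insert 0 (Suc ` {n. x n \<noteq> 0})"
proof (intro equalityI subsetI)
  fix n assume s: "suminf x > 0" and n: "n \<in> {n. shift x n \<noteq> 0}"
  show "n \<in> insert 0 (Suc ` {n. x n \<noteq> 0})"
  proof (cases n)
    case (Suc m) then show ?thesis using n by auto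
  qed simp
qed (auto simp: shift_def)

lemma reps_shift:
  assumes p: "pos_seq x" and s: "suminf x > 0"
  shows "representations (shift x) t =
   (image Suc) ` representations x t \<union> (\<lambda>B. insert 0 (Suc ` B)) ` representations x (t - suminf x)"
proof (intro equalityI subsetI)
  fix A assume A: "A \<in> representations (shift x) t"
  define B where "B = {n. Suc n \<in> A}"
  have AB: "A = (if 0 \<in> A then insert 0 (Suc ` B) else Suc ` B)"
  proof -
    have "Suc ` B = A - {0}"
    proof (intro equalityI subsetI)
      fix a assume "a \<in> A - {0}"
      then have "Suc (a - 1) \<in> A" "a = Suc (a - 1)" by auto
      then show "a \<in> Suc ` B" unfolding B_def by blast
    qed (auto simp: B_def)
    then show ?thesis by auto
  qed
  have Bs: "B \<subseteq> {n. x n \<noteq> 0}" using A unfolding B_def representations_def supp_shift[OF s] by auto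
  have "subsum (shift x) A = t" using A unfolding representations_def by auto
  then have sumt: "(if 0 \<in> A then suminf x else 0) + subsum x B = t" unfolding B_def using subsum_shift[OF p] by simp
  then show "A \<in> (image Suc) ` representations x t \<union> (\<lambda>B. insert 0 (Suc ` B)) ` representations x (t - suminf x)"
  proof (cases "0 \<in> A")
    case True
    then have "A = insert 0 (Suc ` B)" "subsum x B = t - suminf x" using AB sumt by auto
    then show ?thesis using Bs unfolding representations_def by blast
  next
    case False
    then have "A = Suc ` B" "subsum x B = t" using AB sumt by auto
    then show ?thesis using Bs unfolding representations_def by blast
  qed
next
  fix A assume "A \<in> (image Suc) ` representations x t \<union> (\<lambda>B. insert 0 (Suc ` B)) ` representations x (t - suminf x)"
  then obtain B where B: "(A = Suc ` B \<and> B \<in> representations x t) \<or> (A = insert 0 (Suc ` B) \<and> B \<in> representations x (t - suminf x))"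
    by blast
  have e: "{n. Suc n \<in> Suc ` B} = B" "{n. Suc n \<in> insert 0 (Suc ` B)} = B" by auto
  from B show "A \<in> representations (shift x) t"
  proof
    assume h: "A = Suc ` B \<and> B \<in> representations x t"
    then have "subsum (shift x) A = subsum x B" using subsum_shift[OF p, of A] e by auto
    moreover have "B \<subseteq> {n. x n \<noteq> 0}" "subsum x B = t" using h unfolding representations_def by auto
    ultimately show ?thesis using h unfolding representations_def supp_shift[OF s] mem_Collect_eq by blast
  next
    assume h: "A = insert 0 (Suc ` B) \<and> B \<in> representations x (t - suminf x)"
    then have "subsum (shift x) A = suminf x + subsum x B" using subsum_shift[OF p, of A] e by auto
    moreover have "B \<subseteq> {n. x n \<noteq> 0}" "subsum x B = t - suminf x" using h unfolding representations_def by auto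
    ultimately show ?thesis using h unfolding representations_def supp_shift[OF s] mem_Collect_eq by auto
  qed
qed

lemma cardval_inj: "inj_on f S \<Longrightarrow> cardval_of (f ` S) = cardval_of S"
proof -
  assume i: "inj_on f S"
  have "countable (f ` S) \<longleftrightarrow> countable S" using countable_image countable_image_inj_on[OF _ i] by blast
  then show ?thesis unfolding cardval_of_def using finite_image_iff[OF i] card_image[OF i] by simp
qed

lemma ach_bounds: "pos_seq x \<Longrightarrow> t \<in> achievement_set x \<Longrightarrow> 0 \<le> t \<and> t \<le> suminf x"
  unfolding achievement_set_def using subsum_nonneg subsum_le by blast

lemma subsum_in_ach: "subsum x A \<in> achievement_set x"
  unfolding achievement_set_def by blast

lemma ach_0: "0 \<in> achievement_set x"
  using subsum_in_ach[of x "{}"] by (simp add: subsum_empty)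

lemma ach_top: "suminf x \<in> achievement_set x"
  using subsum_in_ach[of x "{n. x n \<noteq> 0}"] by (simp add: subsum_supp)

lemma reps_out: "pos_seq x \<Longrightarrow> t < 0 \<or> t > suminf x \<Longrightarrow> representations x t = {}"
proof -
  assume p: "pos_seq x" and t: "t < 0 \<or> t > suminf x"
  have "subsum x A \<noteq> t" for A using subsum_nonneg[OF p, of A] subsum_le[OF p, of A] t by linarith
  then show ?thesis unfolding representations_def by blast
qed

lemma reps_top: "pos_seq x \<Longrightarrow> representations x (suminf x) = {{n. x n \<noteq> 0}}"
proof -
  assume p: "pos_seq x"
  have "A = {n. x n \<noteq> 0}" if "A \<in> representations x (suminf x)" for A
    using that subsum_eq_top[OF p] unfolding representations_def by blast
  moreover have "{n. x n \<noteq> 0} \<in> representations x (suminf x)"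
    unfolding representations_def using subsum_supp[of x] by blast
  ultimately show ?thesis by blast
qed

lemma reps_zero: "pos_seq x \<Longrightarrow> representations x 0 = {{}}"
proof -
  assume p: "pos_seq x"
  have "A = {}" if "A \<in> representations x 0" for A
    using that subsum_eq_zero[OF p] unfolding representations_def by blast
  moreover have "{} \<in> representations x 0"
    unfolding representations_def using subsum_empty[of x] by blast
  ultimately show ?thesis by blast
qed

lemma inj_image_Suc: "inj_on (image Suc) S"
  by (rule inj_onI) (simp add: inj_image_eq_iff)

lemma inj_image_ins: "inj_on (\<lambda>B. insert 0 (Suc ` B)) S"
proof (rule inj_onI)
  fix A B assume h: "insert 0 (Suc ` A) = insert (0::nat) (Suc ` B)"
  have "Suc ` A = insert 0 (Suc ` A) - {0}" "Suc ` B = insert 0 (Suc ` B) - {0}" by auto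
  then have "Suc ` A = Suc ` B" using h by simp
  then show "A = B" by (simp add: inj_image_eq_iff)
qed

lemma cf_shift:
  assumes p: "pos_seq x" and s: "suminf x > 0"
  shows "cf_range (shift x) = insert (Fin 2) (cf_range x)"
proof -
  let ?s = "suminf x" and ?K = "achievement_set x"
  have low: "cardinal_function (shift x) t = cardinal_function x t" if "t \<in> ?K" "t \<noteq> ?s" for t
  proof -
    have "t < ?s" using ach_bounds[OF p that(1)] that(2) by linarith
    then have "representations x (t - ?s) = {}" using reps_out[OF p] by simp
    then have "representations (shift x) t = image Suc ` representations x t" using reps_shift[OF p s, of t] by simp
    then show ?thesis unfolding cardinal_function_def using cardval_inj[OF inj_image_Suc] by simp
  qed
  have high: "cardinal_function (shift x) (?s + u) = cardinal_function x u" if "u \<in> ?K" "u \<noteq> 0" for u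
  proof -
    have "u > 0" using ach_bounds[OF p that(1)] that(2) by linarith
    then have "representations x (?s + u) = {}" using reps_out[OF p] by simp
    then have "representations (shift x) (?s + u) = (\<lambda>B. insert 0 (Suc ` B)) ` representations x u" using reps_shift[OF p s, of "?s + u"] by simp
    then show ?thesis unfolding cardinal_function_def using cardval_inj[OF inj_image_ins] by simp
  qed
  have mid: "cardinal_function (shift x) ?s = Fin 2"
  proof -
    have "representations (shift x) ?s = {Suc ` {n. x n \<noteq> 0}, {0}}"
      using reps_shift[OF p s, of ?s] reps_top[OF p] reps_zero[OF p] by auto
    moreover have "Suc ` {n. x n \<noteq> 0} \<noteq> {0}" by auto
    ultimately show ?thesis unfolding cardinal_function_def cardval_of_def by simp
  qed
  have one: "cardinal_function x ?s = Fin 1" "cardinal_function x 0 = Fin 1"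
    unfolding cardinal_function_def cardval_of_def using reps_top[OF p] reps_zero[OF p] by auto
  have s0: "?s \<noteq> 0" using s by simp
  show ?thesis unfolding cf_range_def ach_shift[OF p]
  proof (intro equalityI subsetI)
    fix c assume "c \<in> cardinal_function (shift x) ` (?K \<union> (+) ?s ` ?K)"
    then obtain t where t: "t \<in> ?K \<union> (+) ?s ` ?K" "c = cardinal_function (shift x) t" by blast
    show "c \<in> insert (Fin 2) (cardinal_function x ` ?K)"
    proof (cases "t = ?s")
      case True then show ?thesis using t mid by simp
    next
      case False
      show ?thesis
      proof (cases "t \<in> ?K")
        case True then show ?thesis using t low[OF True False] by simp
      next
        case nK: False
        then obtain u where u: "u \<in> ?K" "t = ?s + u" using t by blast
        then have "u \<noteq> 0" using False by auto
        then show ?thesis using t u high by simp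
      qed
    qed
  next
    fix c assume c: "c \<in> insert (Fin 2) (cardinal_function x ` ?K)"
    have sK: "?s \<in> ?K \<union> (+) ?s ` ?K" using ach_top by blast
    have zK: "0 \<in> ?K \<union> (+) ?s ` ?K" using ach_0 by blast
    show "c \<in> cardinal_function (shift x) ` (?K \<union> (+) ?s ` ?K)"
    proof (cases "c = Fin 2")
      case True then show ?thesis using mid sK by (metis image_eqI)
    next
      case False
      then obtain t where t: "t \<in> ?K" "c = cardinal_function x t" using c by blast
      show ?thesis
      proof (cases "t = ?s")
        case True
        then have "c = cardinal_function (shift x) 0" using t one low[OF ach_0] s0 by auto
        then show ?thesis using zK by blast
      next
        case False
        then have "c = cardinal_function (shift x) t" using t low by simp
        then show ?thesis using t(1) by blast
      qed
    qed
  qed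
qed

lemma comp_interval: "connected_component_set (S::real set) y = C \<Longrightarrow> a \<in> C \<Longrightarrow> b \<in> C \<Longrightarrow> a \<le> w \<Longrightarrow> w \<le> b \<Longrightarrow> w \<in> C"
  using is_interval_connected_1[of C] connected_connected_component[of S y] unfolding is_interval_1 by blast

lemma comp_union_left:
  fixes K L :: "real set" and s :: real
  assumes KL: "K \<subseteq> {..s}" "L \<subseteq> {s..}" "s \<in> K" "s \<in> L"
    and cK: "connected_component_set K s = {s}" and cL: "connected_component_set L s = {s}"
    and y: "y \<in> K"
  shows "connected_component_set (K \<union> L) y = connected_component_set K y"
proof
  show "connected_component_set K y \<subseteq> connected_component_set (K \<union> L) y"
    by (rule connected_component_mono) blast
next
  define C where "C = connected_component_set (K \<union> L) y"
  have sub: "C \<subseteq> K \<union> L" unfolding C_def by (rule connected_component_subset)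
  have yC: "y \<in> C" unfolding C_def using y connected_component_refl[of y "K \<union> L"] by blast
  have intC: "is_interval C" unfolding C_def is_interval_connected_1 by simp
  define D where "D = C \<inter> {..s}"
  have "is_interval D" unfolding D_def by (rule is_interval_Int[OF intC is_interval_ic])
  then have cD: "connected D" using is_interval_connected_1[of D] by simp
  have DK: "D \<subseteq> K"
  proof
    fix z assume "z \<in> D"
    then have "z \<in> K \<union> L" "z \<le> s" using sub unfolding D_def by auto
    then show "z \<in> K" using KL by (metis UnE atLeast_iff order_antisym subsetD)
  qed
  have yD: "y \<in> D" unfolding D_def using yC y KL by auto
  have Dsub: "D \<subseteq> connected_component_set K y" by (rule connected_component_maximal[OF yD cD DK])
  define E where "E = C \<inter> {s..}"
  have "is_interval E" unfolding E_def by (rule is_interval_Int[OF intC is_interval_ci])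
  then have cE: "connected E" using is_interval_connected_1[of E] by simp
  have EL: "E \<subseteq> L"
  proof
    fix z assume "z \<in> E"
    then have "z \<in> K \<union> L" "s \<le> z" using sub unfolding E_def by auto
    then show "z \<in> L" using KL by (metis UnE atMost_iff order_antisym subsetD)
  qed
  have Cs: "C \<subseteq> {..s}"
  proof
    fix z assume zC: "z \<in> C"
    show "z \<in> {..s}"
    proof (rule ccontr)
      assume "z \<notin> {..s}"
      then have zs: "z > s" by simp
      have ys: "y \<le> s" using y KL by auto
      have sC: "s \<in> C" using comp_interval[OF C_def[symmetric] yC zC ys] zs by simp
      have sE: "s \<in> E" using sC unfolding E_def by auto
      have "E \<subseteq> connected_component_set L s" by (rule connected_component_maximal[OF sE cE EL])
      moreover have "z \<in> E" unfolding E_def using zC zs by simp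
      ultimately have "z \<in> {s}" using cL by blast
      then show False using zs by simp
    qed
  qed
  then have "C \<subseteq> D" unfolding D_def by blast
  then show "connected_component_set (K \<union> L) y \<subseteq> connected_component_set K y" using Dsub unfolding C_def by blast
qed

lemma comp_union_right:
  fixes K L :: "real set" and s :: real
  assumes KL: "K \<subseteq> {..s}" "L \<subseteq> {s..}" "s \<in> K" "s \<in> L"
    and cK: "connected_component_set K s = {s}" and cL: "connected_component_set L s = {s}"
    and y: "y \<in> L"
  shows "connected_component_set (K \<union> L) y = connected_component_set L y"
proof
  show "connected_component_set L y \<subseteq> connected_component_set (K \<union> L) y"
    by (rule connected_component_mono) blast
next
  define C where "C = connected_component_set (K \<union> L) y"
  have sub: "C \<subseteq> K \<union> L" unfolding C_def by (rule connected_component_subset)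
  have yC: "y \<in> C" unfolding C_def using y connected_component_refl[of y "K \<union> L"] by blast
  have intC: "is_interval C" unfolding C_def is_interval_connected_1 by simp
  define D where "D = C \<inter> {s..}"
  have "is_interval D" unfolding D_def by (rule is_interval_Int[OF intC is_interval_ci])
  then have cD: "connected D" using is_interval_connected_1[of D] by simp
  have DK: "D \<subseteq> L"
  proof
    fix z assume "z \<in> D"
    then have "z \<in> K \<union> L" "s \<le> z" using sub unfolding D_def by auto
    then show "z \<in> L" using KL by (metis UnE atMost_iff order_antisym subsetD)
  qed
  have yD: "y \<in> D" unfolding D_def using yC y KL by auto
  have Dsub: "D \<subseteq> connected_component_set L y" by (rule connected_component_maximal[OF yD cD DK])
  define E where "E = C \<inter> {..s}"
  have "is_interval E" unfolding E_def by (rule is_interval_Int[OF intC is_interval_ic])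
  then have cE: "connected E" using is_interval_connected_1[of E] by simp
  have EL: "E \<subseteq> K"
  proof
    fix z assume "z \<in> E"
    then have "z \<in> K \<union> L" "z \<le> s" using sub unfolding E_def by auto
    then show "z \<in> K" using KL by (metis UnE atLeast_iff order_antisym subsetD)
  qed
  have Cs: "C \<subseteq> {s..}"
  proof
    fix z assume zC: "z \<in> C"
    show "z \<in> {s..}"
    proof (rule ccontr)
      assume "z \<notin> {s..}"
      then have zs: "z < s" by simp
      have ys: "s \<le> y" using y KL by auto
      have sC: "s \<in> C" using comp_interval[OF C_def[symmetric] zC yC _ ys] zs by simp
      have sE: "s \<in> E" using sC unfolding E_def by auto
      have "E \<subseteq> connected_component_set K s" by (rule connected_component_maximal[OF sE cE EL])
      moreover have "z \<in> E" unfolding E_def using zC zs by simp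
      ultimately have "z \<in> {s}" using cK by blast
      then show False using zs by simp
    qed
  qed
  then have "C \<subseteq> D" unfolding D_def by blast
  then show "connected_component_set (K \<union> L) y \<subseteq> connected_component_set L y" using Dsub unfolding C_def by blast
qed

definition triv :: "real set \<Rightarrow> real set" where
  "triv S = {p\<in>S. connected_component_set S p = {p}}"

lemma cantorval_cond:
  assumes "cantorval S" "y \<in> S" "z \<in> connected_component_set S y" "z \<noteq> y"
  shows "Inf (connected_component_set S y) islimpt triv S \<and> Sup (connected_component_set S y) islimpt triv S"
  using assms unfolding cantorval_def triv_def Let_def by blast

lemma cv_top:
  assumes cv: "cantorval S" and Sm: "S \<subseteq> {..m}" and m: "m \<in> S"
  shows "connected_component_set S m = {m}"
proof (rule ccontr)
  define C where "C = connected_component_set S m"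
  assume "connected_component_set S m \<noteq> {m}"
  moreover have mC: "m \<in> C" unfolding C_def using m by simp
  ultimately obtain z where zC: "z \<in> C" and zm: "z \<noteq> m" unfolding C_def by blast
  have CS: "C \<subseteq> S" unfolding C_def by (rule connected_component_subset)
  have "Sup C islimpt triv S" using cantorval_cond[OF cv m zC[unfolded C_def] zm] unfolding C_def by blast
  moreover have "Sup C = m" using mC CS Sm by (intro cSup_eq_maximum) auto
  ultimately have "m islimpt triv S" by simp
  moreover have "z < m" using zC CS Sm zm by fastforce
  ultimately obtain p where p: "p \<in> triv S" "p \<noteq> m" "dist p m < m - z"
    unfolding islimpt_approachable by (metis diff_gt_0_iff_gt)
  have pS: "p \<in> S" and pc: "connected_component_set S p = {p}" using p(1) unfolding triv_def by auto
  have "p \<le> m" using pS Sm by auto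
  moreover have "z < p" using p(3) unfolding dist_real_def by linarith
  ultimately have "p \<in> C" using comp_interval[OF C_def[symmetric] zC mC] by simp
  then have "connected_component_set S p = C" unfolding C_def by (rule connected_component_eq)
  then have "z = p" using pc zC by blast
  then show False using \<open>z < p\<close> by simp
qed

lemma cv_bot:
  assumes cv: "cantorval S" and Sm: "S \<subseteq> {m..}" and m: "m \<in> S"
  shows "connected_component_set S m = {m}"
proof (rule ccontr)
  define C where "C = connected_component_set S m"
  assume "connected_component_set S m \<noteq> {m}"
  moreover have mC: "m \<in> C" unfolding C_def using m by simp
  ultimately obtain z where zC: "z \<in> C" and zm: "z \<noteq> m" unfolding C_def by blast
  have CS: "C \<subseteq> S" unfolding C_def by (rule connected_component_subset)
  have "Inf C islimpt triv S" using cantorval_cond[OF cv m zC[unfolded C_def] zm] unfolding C_def by blast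
  moreover have "Inf C = m" using mC CS Sm by (intro cInf_eq_minimum) auto
  ultimately have "m islimpt triv S" by simp
  moreover have "m < z" using zC CS Sm zm by fastforce
  ultimately obtain p where p: "p \<in> triv S" "p \<noteq> m" "dist p m < z - m"
    unfolding islimpt_approachable by (metis diff_gt_0_iff_gt)
  have pS: "p \<in> S" and pc: "connected_component_set S p = {p}" using p(1) unfolding triv_def by auto
  have "m \<le> p" using pS Sm by auto
  moreover have "p < z" using p(3) unfolding dist_real_def by linarith
  ultimately have "p \<in> C" using comp_interval[OF C_def[symmetric] mC zC] by simp
  then have "connected_component_set S p = C" unfolding C_def by (rule connected_component_eq)
  then have "z = p" using pc zC by blast
  then show False using \<open>p < z\<close> by simp
qed

lemma connected_transl: "connected (S::real set) \<Longrightarrow> connected ((+) c ` S)"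
  by (rule connected_continuous_image) (auto intro!: continuous_intros)

lemma comp_translate:
  fixes S :: "real set"
  shows "connected_component_set ((+) c ` S) (c + y) = (+) c ` connected_component_set S y"
proof (cases "y \<in> S")
  case False
  then have "c + y \<notin> (+) c ` S" by auto
  then have "connected_component_set ((+) c ` S) (c + y) = {}" by (rule iffD2[OF connected_component_eq_empty])
  moreover have "connected_component_set S y = {}" using False by (rule iffD2[OF connected_component_eq_empty])
  ultimately show ?thesis by (metis image_empty)
next
  case True
  show ?thesis
  proof
    show "(+) c ` connected_component_set S y \<subseteq> connected_component_set ((+) c ` S) (c + y)"
    proof (rule connected_component_maximal)
      show "c + y \<in> (+) c ` connected_component_set S y" using True by simp
      show "connected ((+) c ` connected_component_set S y)" by (rule connected_transl) simp
      show "(+) c ` connected_component_set S y \<subseteq> (+) c ` S"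
        using connected_component_subset by (rule image_mono)
    qed
  next
    define C where "C = connected_component_set ((+) c ` S) (c + y)"
    have "(+) (-c) ` C \<subseteq> connected_component_set S y"
    proof (rule connected_component_maximal)
      have "c + y \<in> C" unfolding C_def using True by simp
      then show "y \<in> (+) (-c) ` C" by (metis add_minus_cancel image_eqI)
      show "connected ((+) (-c) ` C)" unfolding C_def by (rule connected_transl) simp
      have "C \<subseteq> (+) c ` S" unfolding C_def by (rule connected_component_subset)
      then show "(+) (-c) ` C \<subseteq> S" by auto
    qed
    then show "C \<subseteq> (+) c ` connected_component_set S y"
    proof (intro subsetI)
      fix w assume sub: "(+) (-c) ` C \<subseteq> connected_component_set S y" and w: "w \<in> C"
      then have "-c + w \<in> connected_component_set S y" by blast
      moreover have "w = c + (-c + w)" by simp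
      ultimately show "w \<in> (+) c ` connected_component_set S y" by (rule rev_image_eqI)
    qed
  qed
qed

lemma islimpt_transl: "(y::real) islimpt T \<Longrightarrow> c + y islimpt (+) c ` T"
  unfolding islimpt_approachable
proof (intro allI impI)
  fix e :: real assume H: "\<forall>e>0. \<exists>x'\<in>T. x' \<noteq> y \<and> dist x' y < e" and e: "e > 0"
  then obtain x' where "x' \<in> T" "x' \<noteq> y" "dist x' y < e" by blast
  then show "\<exists>x'\<in>(+) c ` T. x' \<noteq> c + y \<and> dist x' (c + y) < e"
    by (intro bexI[of _ "c + x'"]) (auto simp: dist_real_def)
qed

lemma triv_transl: "triv ((+) c ` S) = (+) c ` triv S"
proof -
  have i: "inj ((+) c)" by (rule injI) simp
  have key: "connected_component_set ((+) c ` S) (c + q) = {c + q} \<longleftrightarrow> connected_component_set S q = {q}" for q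
  proof -
    have "(+) c ` {q} = {c + q}" by simp
    then have "connected_component_set ((+) c ` S) (c + q) = {c + q} \<longleftrightarrow> (+) c ` connected_component_set S q = (+) c ` {q}"
      unfolding comp_translate by simp
    also have "\<dots> \<longleftrightarrow> connected_component_set S q = {q}" by (rule inj_image_eq_iff[OF i])
    finally show ?thesis .
  qed
  show ?thesis
  proof (intro equalityI subsetI)
    fix p assume "p \<in> triv ((+) c ` S)"
    then obtain q where q: "q \<in> S" "p = c + q" "connected_component_set ((+) c ` S) (c + q) = {c + q}"
      unfolding triv_def by blast
    then have "q \<in> triv S" unfolding triv_def using key by blast
    then show "p \<in> (+) c ` triv S" using q(2) by blast
  next
    fix p assume "p \<in> (+) c ` triv S"
    then obtain q where q: "q \<in> S" "p = c + q" "connected_component_set S q = {q}"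
      unfolding triv_def by blast
    then show "p \<in> triv ((+) c ` S)" unfolding triv_def using key by blast
  qed
qed

lemma cantor_transl: "cantor_set S \<Longrightarrow> cantor_set ((+) (c::real) ` S)"
  unfolding cantor_set_def
proof (elim conjE, intro conjI ballI)
  assume "S \<noteq> {}" "compact S" and lim: "\<forall>y\<in>S. y islimpt S"
    and cc: "\<forall>y\<in>S. connected_component_set S y = {y}"
  show "(+) c ` S \<noteq> {}" using \<open>S \<noteq> {}\<close> by simp
  show "compact ((+) c ` S)" using \<open>compact S\<close> by (rule compact_translation)
  fix y assume "y \<in> (+) c ` S"
  then obtain u where u: "u \<in> S" "y = c + u" by blast
  show "y islimpt (+) c ` S" using islimpt_transl lim u by blast
  show "connected_component_set ((+) c ` S) y = {y}" using u cc comp_translate by simp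
qed

lemma cantorval_intro:
  assumes "S \<noteq> {}" "compact S" "closure (interior S) = S"
    and "\<And>y z. y \<in> S \<Longrightarrow> z \<in> connected_component_set S y \<Longrightarrow> z \<noteq> y \<Longrightarrow>
      Inf (connected_component_set S y) islimpt triv S \<and> Sup (connected_component_set S y) islimpt triv S"
  shows "cantorval S"
  using assms unfolding cantorval_def triv_def Let_def by blast

lemma cantorval_transl:
  assumes cv: "cantorval S"
  shows "cantorval ((+) (c::real) ` S)"
proof (rule cantorval_intro)
  have S: "S \<noteq> {}" "compact S" "closure (interior S) = S" using cv unfolding cantorval_def by auto
  show "(+) c ` S \<noteq> {}" using S by simp
  show "compact ((+) c ` S)" using S by (simp add: compact_translation)
  show "closure (interior ((+) c ` S)) = (+) c ` S" using S by (simp add: interior_translation closure_translation)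
  fix y z assume y: "y \<in> (+) c ` S" and z: "z \<in> connected_component_set ((+) c ` S) y" and zy: "z \<noteq> y"
  then obtain u where u: "u \<in> S" "y = c + u" by blast
  define C0 where "C0 = connected_component_set S u"
  have C: "connected_component_set ((+) c ` S) y = (+) c ` C0" unfolding C0_def u(2) comp_translate ..
  obtain z0 where z0: "z0 \<in> C0" "z = c + z0" using z C by blast
  have "z0 \<noteq> u" using zy z0 u by simp
  then have lim: "Inf C0 islimpt triv S \<and> Sup C0 islimpt triv S"
    using cantorval_cond[OF cv u(1) z0(1)[unfolded C0_def]] unfolding C0_def by blast
  have ne: "C0 \<noteq> {}" using z0 by blast
  have "bounded C0" using compact_imp_bounded[OF S(2)] connected_component_subset unfolding C0_def
    by (rule bounded_subset)
  then have bb: "bdd_below C0" "bdd_above C0" by (auto intro: bounded_imp_bdd_below bounded_imp_bdd_above)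
  have "Inf ((+) c ` C0) = c + Inf C0" using Inf_add_eq[of "\<lambda>x. x" C0 c] bb ne by simp
  moreover have "Sup ((+) c ` C0) = c + Sup C0" using Sup_add_eq[of "\<lambda>x. x" C0 c] bb ne by simp
  ultimately show "Inf (connected_component_set ((+) c ` S) y) islimpt triv ((+) c ` S) \<and>
        Sup (connected_component_set ((+) c ` S) y) islimpt triv ((+) c ` S)"
    unfolding C triv_transl using lim islimpt_transl by simp
qed

lemma cantor_union:
  fixes K L :: "real set"
  assumes KL: "K \<subseteq> {..s}" "L \<subseteq> {s..}" "s \<in> K" "s \<in> L"
    and cK: "cantor_set K" and cL: "cantor_set L"
  shows "cantor_set (K \<union> L)"
proof -
  have K: "K \<noteq> {}" "compact K" "\<forall>y\<in>K. y islimpt K" "\<forall>y\<in>K. connected_component_set K y = {y}"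
    using cK unfolding cantor_set_def by auto
  have L: "L \<noteq> {}" "compact L" "\<forall>y\<in>L. y islimpt L" "\<forall>y\<in>L. connected_component_set L y = {y}"
    using cL unfolding cantor_set_def by auto
  have cs: "connected_component_set K s = {s}" "connected_component_set L s = {s}" using K(4) L(4) KL by auto
  show ?thesis unfolding cantor_set_def
  proof (intro conjI ballI)
    show "K \<union> L \<noteq> {}" using K by simp
    show "compact (K \<union> L)" using K L by (simp add: compact_Un)
    fix y assume y: "y \<in> K \<union> L"
    show "y islimpt K \<union> L"
    proof (cases "y \<in> K")
      case True then show ?thesis using K(3) islimpt_subset[of y K "K \<union> L"] by blast
    next
      case False then have "y \<in> L" using y by blast
      then show ?thesis using L(3) islimpt_subset[of y L "K \<union> L"] by blast
    qed
    show "connected_component_set (K \<union> L) y = {y}"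
    proof (cases "y \<in> K")
      case True then show ?thesis using comp_union_left[OF KL cs True] K(4) by simp
    next
      case False then have "y \<in> L" using y by blast
      then show ?thesis using comp_union_right[OF KL cs] L(4) by simp
    qed
  qed
qed

lemma triv_union_left:
  fixes K L :: "real set"
  assumes KL: "K \<subseteq> {..s}" "L \<subseteq> {s..}" "s \<in> K" "s \<in> L"
    and cs: "connected_component_set K s = {s}" "connected_component_set L s = {s}"
  shows "triv K \<subseteq> triv (K \<union> L)" "triv L \<subseteq> triv (K \<union> L)"
proof -
  show "triv K \<subseteq> triv (K \<union> L)"
  proof
    fix p assume "p \<in> triv K"
    then have p: "p \<in> K" "connected_component_set K p = {p}" unfolding triv_def by auto
    then show "p \<in> triv (K \<union> L)" using comp_union_left[OF KL cs p(1)] unfolding triv_def by simp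
  qed
  show "triv L \<subseteq> triv (K \<union> L)"
  proof
    fix p assume "p \<in> triv L"
    then have p: "p \<in> L" "connected_component_set L p = {p}" unfolding triv_def by auto
    then show "p \<in> triv (K \<union> L)" using comp_union_right[OF KL cs p(1)] unfolding triv_def by simp
  qed
qed

lemma cantorval_union:
  fixes K L :: "real set"
  assumes KL: "K \<subseteq> {..s}" "L \<subseteq> {s..}" "s \<in> K" "s \<in> L"
    and cK: "cantorval K" and cL: "cantorval L"
  shows "cantorval (K \<union> L)"
proof (rule cantorval_intro)
  have K: "K \<noteq> {}" "compact K" "closure (interior K) = K" using cK unfolding cantorval_def by auto
  have L: "L \<noteq> {}" "compact L" "closure (interior L) = L" using cL unfolding cantorval_def by auto
  have cs: "connected_component_set K s = {s}" "connected_component_set L s = {s}"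
    using cv_top[OF cK KL(1,3)] cv_bot[OF cL KL(2,4)] by auto
  show "K \<union> L \<noteq> {}" using K by simp
  show "compact (K \<union> L)" using K L by (simp add: compact_Un)
  show "closure (interior (K \<union> L)) = K \<union> L"
  proof
    have "closed (K \<union> L)" using K L by (simp add: compact_imp_closed closed_Un)
    then show "closure (interior (K \<union> L)) \<subseteq> K \<union> L"
      by (metis closure_closed closure_mono interior_subset)
    have "K \<subseteq> closure (interior (K \<union> L))" using K(3) by (metis closure_mono interior_mono sup_ge1)
    moreover have "L \<subseteq> closure (interior (K \<union> L))" using L(3) by (metis closure_mono interior_mono sup_ge2)
    ultimately show "K \<union> L \<subseteq> closure (interior (K \<union> L))" by blast
  qed
  fix y z assume y: "y \<in> K \<union> L" and z: "z \<in> connected_component_set (K \<union> L) y" and zy: "z \<noteq> y"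
  note tr = triv_union_left[OF KL cs]
  show "Inf (connected_component_set (K \<union> L) y) islimpt triv (K \<union> L) \<and>
        Sup (connected_component_set (K \<union> L) y) islimpt triv (K \<union> L)"
  proof (cases "y \<in> K")
    case True
    note e = comp_union_left[OF KL cs True]
    have "Inf (connected_component_set K y) islimpt triv K \<and> Sup (connected_component_set K y) islimpt triv K"
      using cantorval_cond[OF cK True] z zy unfolding e by blast
    then show ?thesis unfolding e using islimpt_subset[OF _ tr(1)] by blast
  next
    case False then have yL: "y \<in> L" using y by blast
    note e = comp_union_right[OF KL cs yL]
    have "Inf (connected_component_set L y) islimpt triv L \<and> Sup (connected_component_set L y) islimpt triv L"
      using cantorval_cond[OF cL yL] z zy unfolding e by blast
    then show ?thesis unfolding e using islimpt_subset[OF _ tr(2)] by blast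
  qed
qed

lemma fui_union:
  assumes "finite_union_intervals K"
  shows "finite_union_intervals (K \<union> (+) (s::real) ` K)"
proof -
  obtain n :: nat and a b :: "nat \<Rightarrow> real" where ab: "\<forall>i<n. a i < b i" and K: "K = (\<Union>i<n. {a i..b i})"
    using assms unfolding finite_union_intervals_def by blast
  define a' where "a' i = (if i < n then a i else a (i - n) + s)" for i
  define b' where "b' i = (if i < n then b i else b (i - n) + s)" for i
  have "\<forall>i<n+n. a' i < b' i" using ab unfolding a'_def b'_def by auto
  moreover have "K \<union> (+) s ` K = (\<Union>i<n+n. {a' i..b' i})"
  proof (intro equalityI subsetI)
    fix t assume "t \<in> K \<union> (+) s ` K"
    then consider (l) i where "i < n" "t \<in> {a i..b i}" | (r) i u where "i < n" "u \<in> {a i..b i}" "t = s + u"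
      unfolding K by blast
    then show "t \<in> (\<Union>i<n+n. {a' i..b' i})"
    proof cases
      case l then show ?thesis unfolding a'_def b'_def by (intro UN_I[of i]) auto
    next
      case r then show ?thesis unfolding a'_def b'_def by (intro UN_I[of "i + n"]) auto
    qed
  next
    fix t assume "t \<in> (\<Union>i<n+n. {a' i..b' i})"
    then obtain i where i: "i < n + n" "t \<in> {a' i..b' i}" by blast
    show "t \<in> K \<union> (+) s ` K"
    proof (cases "i < n")
      case True then show ?thesis using i unfolding K a'_def b'_def by auto
    next
      case False
      then have "t - s \<in> {a (i - n)..b (i - n)}" "i - n < n" using i unfolding a'_def b'_def by auto
      then have "t - s \<in> K" unfolding K by blast
      moreover have "t = s + (t - s)" by simp
      ultimately show ?thesis by blast
    qed
  qed
  ultimately show ?thesis unfolding finite_union_intervals_def by blast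
qed

lemma si_union:
  assumes "single_interval K" "K \<subseteq> {0..s}" "0 \<in> K" "(s::real) \<in> K"
  shows "single_interval (K \<union> (+) s ` K)"
proof -
  obtain a b where ab: "a < b" "K = {a..b}" using assms(1) unfolding single_interval_def by blast
  have "a = 0" using assms(2,3) ab by force
  moreover have "b = s" using assms(2,4) ab by force
  ultimately have "K \<union> (+) s ` K = {0..s} \<union> {s..s+s}" using ab by (simp add: add.commute)
  also have "\<dots> = {0..s+s}" using ab \<open>a = 0\<close> \<open>b = s\<close> by auto
  finally show ?thesis unfolding single_interval_def using ab \<open>a = 0\<close> \<open>b = s\<close> by auto
qed

lemma shift_geom:
  assumes p: "pos_seq x" and x0: "x 0 > 0"
  defines "K \<equiv> achievement_set x" and "s \<equiv> suminf x"
  shows "suminf x > 0" "K \<subseteq> {..s}" "(+) s ` K \<subseteq> {s..}" "s \<in> K" "s \<in> (+) s ` K" "K \<subseteq> {0..s}" "0 \<in> K"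
    "achievement_set (shift x) = K \<union> (+) s ` K"
proof -
  show "suminf x > 0" using subsum_ge_term[OF p, of 0 UNIV] x0 subsum_le[OF p, of UNIV] by simp
  show "K \<subseteq> {0..s}" using ach_bounds[OF p] unfolding K_def s_def by auto
  then show "K \<subseteq> {..s}" by auto
  show "(+) s ` K \<subseteq> {s..}" using ach_bounds[OF p] unfolding K_def s_def by auto
  show "s \<in> K" unfolding K_def s_def by (rule ach_top)
  show "0 \<in> K" unfolding K_def by (rule ach_0)
  then show "s \<in> (+) s ` K" by (metis add.right_neutral image_eqI)
  show "achievement_set (shift x) = K \<union> (+) s ` K" unfolding K_def s_def by (rule ach_shift[OF p])
qed

lemma zero_case: "pos_seq x \<Longrightarrow> \<not> x 0 > 0 \<Longrightarrow> x n = 0"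
  unfolding pos_seq_def by (metis gr0I le0 less_le_not_le)

lemma ach_zero: "(\<And>n. x n = 0) \<Longrightarrow> achievement_set x = {0}"
proof -
  assume z: "\<And>n. x n = 0"
  have "subsum x A = 0" for A
  proof -
    have "(\<lambda>n. if n \<in> A then x n else 0) = (\<lambda>n. 0)" using z by auto
    then show ?thesis unfolding subsum_def by simp
  qed
  then show ?thesis unfolding achievement_set_def by auto
qed

lemma cf_zero: "pos_seq x \<Longrightarrow> (\<And>n. x n = 0) \<Longrightarrow> cf_range x = {Fin 1}"
proof -
  assume p: "pos_seq x" and z: "\<And>n. x n = 0"
  have "cardinal_function x 0 = Fin 1" unfolding cardinal_function_def cardval_of_def using reps_zero[OF p] by simp
  then show ?thesis unfolding cf_range_def ach_zero[OF z] by simp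
qed

definition w1 :: "nat \<Rightarrow> real" where "w1 n = (if n = 0 then 1 else 0)"

lemma w1_pos: "pos_seq w1" "finite_seq w1" "w1 0 > 0"
proof -
  have "summable w1" unfolding w1_def by (rule summable_finite[of "{0}"]) auto
  moreover have "\<forall>n. (n < 1 \<longrightarrow> w1 n > 0) \<and> (1 \<le> n \<longrightarrow> w1 n = 0)" unfolding w1_def by auto
  ultimately show p: "pos_seq w1" unfolding pos_seq_def by blast
  have "{n. w1 n \<noteq> 0} = {0}" unfolding w1_def by auto
  then show "finite_seq w1" using p unfolding finite_seq_def by simp
  show "w1 0 > 0" unfolding w1_def by simp
qed

lemma w1_cf: "cf_range w1 = {Fin 1}"
proof -
  have sub: "subsum w1 A = (if 0 \<in> A then 1 else 0)" for A
  proof -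
    have "subsum w1 A = (\<Sum>n\<in>{0}. if n \<in> A then w1 n else 0)" unfolding subsum_def
      by (rule suminf_finite) (auto simp: w1_def)
    then show ?thesis by (simp add: w1_def)
  qed
  have s: "suminf w1 = 1" using sub[of UNIV] subsum_def[of w1 UNIV] by simp
  have one: "cardinal_function w1 t = Fin 1" if "t \<in> achievement_set w1" for t
  proof -
    have "t = 0 \<or> t = suminf w1" using that sub s unfolding achievement_set_def by auto
    then show ?thesis unfolding cardinal_function_def cardval_of_def
      using reps_zero[OF w1_pos(1)] reps_top[OF w1_pos(1)] by auto
  qed
  have "cardinal_function w1 ` achievement_set w1 \<subseteq> {Fin 1}" using one by blast
  moreover have "Fin 1 \<in> cardinal_function w1 ` achievement_set w1" using one[OF ach_0] ach_0[of w1] by (metis image_eqI)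
  ultimately show ?thesis unfolding cf_range_def by blast
qed

lemma finite_shift: "finite_seq x \<Longrightarrow> x 0 > 0 \<Longrightarrow> finite_seq (shift x)"
proof -
  assume f: "finite_seq x" and x0: "x 0 > 0"
  have p: "pos_seq x" using f unfolding finite_seq_def by blast
  note g = shift_geom[OF p x0]
  have "finite {n. shift x n \<noteq> 0}" unfolding supp_shift[OF g(1)] using f unfolding finite_seq_def by simp
  then show ?thesis using shift_pos[OF p x0] unfolding finite_seq_def by blast
qed

lemma case_F:
  assumes "M \<in> fam_F"
  shows "insert (Fin 2) M \<in> fam_F"
proof -
  obtain x where x: "M = cf_range x" "finite_seq x" using assms unfolding fam_F_def by blast
  have p: "pos_seq x" using x(2) unfolding finite_seq_def by blast
  show ?thesis
  proof (cases "x 0 > 0")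
    case True
    have "insert (Fin 2) M = cf_range (shift x)" using cf_shift[OF p shift_geom(1)[OF p True]] x(1) by simp
    then show ?thesis using finite_shift[OF x(2) True] unfolding fam_F_def by blast
  next
    case False
    have "M = cf_range w1" using cf_zero[OF p zero_case[OF p False]] w1_cf x(1) by simp
    then have "insert (Fin 2) M = cf_range (shift w1)"
      using cf_shift[OF w1_pos(1) shift_geom(1)[OF w1_pos(1) w1_pos(3)]] by simp
    then show ?thesis using finite_shift[OF w1_pos(2,3)] unfolding fam_F_def by blast
  qed
qed

lemma case_I:
  assumes "M \<in> fam_I"
  shows "insert (Fin 2) M \<in> fam_I"
proof -
  obtain x where x: "M = cf_range x" "pos_seq x" "finite_union_intervals (achievement_set x)"
    using assms unfolding fam_I_def by blast
  have x0: "x 0 > 0"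
  proof (rule ccontr)
    assume "\<not> x 0 > 0"
    then have "achievement_set x = {0}" using ach_zero zero_case[OF x(2)] by blast
    then obtain n :: nat and a b :: "nat \<Rightarrow> real" where ab: "\<forall>i<n. a i < b i" "{0} = (\<Union>i<n. {a i..b i})"
      using x(3) unfolding finite_union_intervals_def by auto
    have "n \<noteq> 0"
    proof
      assume "n = 0" then show False using ab(2) by simp
    qed
    then have lt: "a 0 < b 0" using ab(1) by simp
    have sub: "{a 0..b 0} \<subseteq> {0}" unfolding ab(2) using \<open>n \<noteq> 0\<close> by (intro UN_upper) simp
    have "a 0 \<in> {a 0..b 0}" "b 0 \<in> {a 0..b 0}" using lt by auto
    then have "a 0 = 0" "b 0 = 0" using sub by blast+
    then show False using lt by simp
  qed
  note g = shift_geom[OF x(2) x0]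
  have "insert (Fin 2) M = cf_range (shift x)" using cf_shift[OF x(2) g(1)] x(1) by simp
  moreover have "finite_union_intervals (achievement_set (shift x))"
    unfolding g(8) by (rule fui_union[OF x(3)])
  ultimately show ?thesis using shift_pos[OF x(2) x0] unfolding fam_I_def by blast
qed

lemma case_I1:
  assumes "M \<in> fam_I1"
  shows "insert (Fin 2) M \<in> fam_I1"
proof -
  obtain x where x: "M = cf_range x" "pos_seq x" "single_interval (achievement_set x)"
    using assms unfolding fam_I1_def by blast
  have x0: "x 0 > 0"
  proof (rule ccontr)
    assume "\<not> x 0 > 0"
    then have "achievement_set x = {0}" using ach_zero zero_case[OF x(2)] by blast
    then obtain a b :: real where ab: "a < b" "{0} = {a..b}" using x(3) unfolding single_interval_def by auto
    have "a \<in> {a..b}" "b \<in> {a..b}" using ab(1) by auto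
    then have "a = 0" "b = 0" unfolding ab(2)[symmetric] by auto
    then show False using ab(1) by simp
  qed
  note g = shift_geom[OF x(2) x0]
  have "insert (Fin 2) M = cf_range (shift x)" using cf_shift[OF x(2) g(1)] x(1) by simp
  moreover have "single_interval (achievement_set (shift x))"
    unfolding g(8) by (rule si_union[OF x(3) g(6) g(7) g(4)])
  ultimately show ?thesis using shift_pos[OF x(2) x0] unfolding fam_I1_def by blast
qed

lemma case_C:
  assumes "M \<in> fam_C"
  shows "insert (Fin 2) M \<in> fam_C"
proof -
  obtain x where x: "M = cf_range x" "pos_seq x" "cantor_set (achievement_set x)"
    using assms unfolding fam_C_def by blast
  have x0: "x 0 > 0"
  proof (rule ccontr)
    assume "\<not> x 0 > 0"
    then have "achievement_set x = {0}" using ach_zero zero_case[OF x(2)] by blast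
    then have "(0::real) islimpt {0}" using x(3) unfolding cantor_set_def by auto
    then have "\<forall>e>0. \<exists>x'\<in>{0::real}. x' \<noteq> 0 \<and> dist x' 0 < e" unfolding islimpt_approachable .
    from this[rule_format, of 1] show False by simp
  qed
  note g = shift_geom[OF x(2) x0]
  have "insert (Fin 2) M = cf_range (shift x)" using cf_shift[OF x(2) g(1)] x(1) by simp
  moreover have "cantor_set (achievement_set (shift x))"
    unfolding g(8) by (rule cantor_union[OF g(2) g(3) g(4) g(5) x(3) cantor_transl[OF x(3)]])
  ultimately show ?thesis using shift_pos[OF x(2) x0] unfolding fam_C_def by blast
qed

lemma case_Cv:
  assumes "M \<in> fam_Cv"
  shows "insert (Fin 2) M \<in> fam_Cv"
proof -
  obtain x where x: "M = cf_range x" "pos_seq x" "cantorval (achievement_set x)"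
    using assms unfolding fam_Cv_def by blast
  have x0: "x 0 > 0"
  proof (rule ccontr)
    assume "\<not> x 0 > 0"
    then have "achievement_set x = {0}" using ach_zero zero_case[OF x(2)] by blast
    then have "closure (interior {0::real}) = {0}" using x(3) unfolding cantorval_def by auto
    moreover have "interior {0::real} = {}" by simp
    ultimately show False by simp
  qed
  note g = shift_geom[OF x(2) x0]
  have "insert (Fin 2) M = cf_range (shift x)" using cf_shift[OF x(2) g(1)] x(1) by simp
  moreover have "cantorval (achievement_set (shift x))"
    unfolding g(8) by (rule cantorval_union[OF g(2) g(3) g(4) g(5) x(3) cantorval_transl[OF x(3)]])
  ultimately show ?thesis using shift_pos[OF x(2) x0] unfolding fam_Cv_def by blast
qed

theorem lemma2p3:
  assumes "J \<in> {fam_F, fam_I, fam_I1, fam_C, fam_Cv}"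
    and "M \<in> J"
  shows "insert (Fin 2) M \<in> J"
  using assms case_F case_I case_I1 case_C case_Cv by blast

end
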